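(* Let $(G,D,\star)$ be any probabilistic metric space where $\star$ is a continuous triangle function, and let $\mathbb D:\Pi(G)\times\Pi(G)\to\Delta^+$ be $\mathbb D(f,g)=\sup_{x\in G}f(x)\star g(x)$. Then: (1) $\mathbb D(\delta_a,\delta_b)=D(a,b)$ for all $a,b\in G$; (2) $(\Pi(G),\mathbb D,\star)$ is a complete probabilistic metric space; (3) $\delta(G)=\{\delta_a:a\in G\}$ is dense in $(\Pi(G),\mathbb D,\star)$, i.e. for every $f\in\Pi(G)$ there is a sequence $(a_n)\subset G$ with $\mathbb D(\delta_{a_n},f)\xrightarrow{w}\mathcal H_0$.
   Context: A distribution function is a nondecreasing, left-continuous function $F:[-\infty,+\infty]\to[0,1]$ with $F(-\infty)=0$, $F(+\infty)=1$; $\Delta^+$ is the set of distribution functions with $F(0)=0$, ordered pointwise (a complete lattice with maximum $\mathcal H_0$, $\mathcal H_0(t)=0$ for $t\le0$, $1$ for $t>0$). A triangle function is a binary operation $\star$ on $\Delta^+$ that is commutative, associative, nondecreasing in each argument, with $F\star\mathcal H_0=F$. $F_n\xrightarrow{w}F$ means $F_n(t)\to F(t)$ at every continuity point $t\in\mathbb R$ of $F$; $\star$ is continuous if $F_n\star L_n\xrightarrow{w}F\star L$ whenever $F_n\xrightarrow{w}F$, $L_n\xrightarrow{w}L$. A probabilistic metric space $(G,D,\star)$ consists of a set $G$, a triangle function $\star$ and $D:G\times G\to\Delta^+$ with (i) $D(p,q)=\mathcal H_0$ iff $p=q$; (ii) $D(p,q)=D(q,p)$; (iii) $D(p,q)\star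 D(q,r)\le D(p,r)$. A sequence $(z_n)$ is Cauchy if $D(z_n,z_p)\xrightarrow{w}\mathcal H_0$ as $n,p\to\infty$; the space is complete if for every Cauchy sequence $(z_n)$ there is $z\in G$ with $D(z_n,z)\xrightarrow{w}\mathcal H_0$. A map $f:G\to\Delta^+$ is probabilistic $1$-Lipschitz if $D(x,y)\star f(y)\le f(x)$ for all $x,y$. $\delta_a(y)=D(y,a)$. $\Pi(G)$ is the set of probabilistic $1$-Lipschitz maps $f$ for which there is a Cauchy sequence $(a_n)\subset G$ with $D(a_n,x)\xrightarrow{w}f(x)$ for all $x\in G$. *)

theory Defs
  imports "HOL-Analysis.Analysis"
begin

type_synonym dfun = "ereal \<Rightarrow> real"

definition distribution_fun :: "dfun \<Rightarrow> bool" where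
  "distribution_fun F \<longleftrightarrow> mono F \<and> (\<forall>t. 0 \<le> F t \<and> F t \<le> 1)
     \<and> F (-\<infinity>) = 0 \<and> F \<infinity> = 1
     \<and> (\<forall>t::real. continuous (at_left t) (\<lambda>x. F (ereal x)))"

definition Delta_plus :: "dfun set" where
  "Delta_plus = {F. distribution_fun F \<and> F (ereal 0) = 0}"

definition H0 :: dfun where
  "H0 t = (if t \<le> 0 then 0 else 1)"

definition wconv :: "('i \<Rightarrow> dfun) \<Rightarrow> dfun \<Rightarrow> 'i filter \<Rightarrow> bool" where
  "wconv Fs L Flt \<longleftrightarrow> (\<forall>t::real. isCont (\<lambda>x. L (ereal x)) t \<longrightarrow>
      ((\<lambda>i. Fs i (ereal t)) \<longlongrightarrow> L (ereal t)) Flt)"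

definition triangle_fun :: "(dfun \<Rightarrow> dfun \<Rightarrow> dfun) \<Rightarrow> bool" where
  "triangle_fun st \<longleftrightarrow>
     (\<forall>F\<in>Delta_plus. \<forall>L\<in>Delta_plus. st F L \<in> Delta_plus)
   \<and> (\<forall>F\<in>Delta_plus. \<forall>L\<in>Delta_plus. st F L = st L F)
   \<and> (\<forall>F\<in>Delta_plus. \<forall>L\<in>Delta_plus. \<forall>K\<in>Delta_plus. st (st F L) K = st F (st L K))
   \<and> (\<forall>F\<in>Delta_plus. \<forall>F'\<in>Delta_plus. \<forall>L\<in>Delta_plus. F \<le> F' \<longrightarrow> st F L \<le> st F' L)
   \<and> (\<forall>F\<in>Delta_plus. st F H0 = F)"

definition continuous_triangle_fun :: "(dfun \<Rightarrow> dfun \<Rightarrow> dfun) \<Rightarrow> bool" where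
  "continuous_triangle_fun st \<longleftrightarrow> triangle_fun st \<and>
     (\<forall>Fs Ls F L. (\<forall>n. Fs n \<in> Delta_plus) \<longrightarrow> (\<forall>n. Ls n \<in> Delta_plus) \<longrightarrow>
        F \<in> Delta_plus \<longrightarrow> L \<in> Delta_plus \<longrightarrow>
        wconv Fs F sequentially \<longrightarrow> wconv Ls L sequentially \<longrightarrow>
        wconv (\<lambda>n. st (Fs n) (Ls n)) (st F L) sequentially)"

definition pm_space :: "'a set \<Rightarrow> ('a \<Rightarrow> 'a \<Rightarrow> dfun) \<Rightarrow> (dfun \<Rightarrow> dfun \<Rightarrow> dfun) \<Rightarrow> bool" where
  "pm_space G D st \<longleftrightarrow> triangle_fun st
   \<and> (\<forall>p\<in>G. \<forall>q\<in>G. D p q \<in> Delta_plus)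
   \<and> (\<forall>p\<in>G. \<forall>q\<in>G. D p q = H0 \<longleftrightarrow> p = q)
   \<and> (\<forall>p\<in>G. \<forall>q\<in>G. D p q = D q p)
   \<and> (\<forall>p\<in>G. \<forall>q\<in>G. \<forall>r\<in>G. st (D p q) (D q r) \<le> D p r)"

definition pm_cauchy :: "'a set \<Rightarrow> ('a \<Rightarrow> 'a \<Rightarrow> dfun) \<Rightarrow> (nat \<Rightarrow> 'a) \<Rightarrow> bool" where
  "pm_cauchy G D z \<longleftrightarrow> (\<forall>n. z n \<in> G) \<and>
     wconv (\<lambda>(n, p). D (z n) (z p)) H0 (sequentially \<times>\<^sub>F sequentially)"

definition pm_complete :: "'a set \<Rightarrow> ('a \<Rightarrow> 'a \<Rightarrow> dfun) \<Rightarrow> (dfun \<Rightarrow> dfun \<Rightarrow> dfun) \<Rightarrow> bool" where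
  "pm_complete G D st \<longleftrightarrow> pm_space G D st \<and>
     (\<forall>z. pm_cauchy G D z \<longrightarrow> (\<exists>x\<in>G. wconv (\<lambda>n. D (z n) x) H0 sequentially))"

definition prob_lipschitz :: "'a set \<Rightarrow> ('a \<Rightarrow> 'a \<Rightarrow> dfun) \<Rightarrow> (dfun \<Rightarrow> dfun \<Rightarrow> dfun)
    \<Rightarrow> ('a \<Rightarrow> dfun) \<Rightarrow> bool" where
  "prob_lipschitz G D st f \<longleftrightarrow> (\<forall>x\<in>G. f x \<in> Delta_plus)
     \<and> (\<forall>x\<in>G. \<forall>y\<in>G. st (D x y) (f y) \<le> f x)"

definition pm_delta :: "'a set \<Rightarrow> ('a \<Rightarrow> 'a \<Rightarrow> dfun) \<Rightarrow> 'a \<Rightarrow> ('a \<Rightarrow> dfun)" where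
  "pm_delta G D a = restrict (\<lambda>y. D y a) G"

text \<open>Pi(G); maps are taken extensional on G so that they are determined by their values on G.\<close>
definition Pi_space :: "'a set \<Rightarrow> ('a \<Rightarrow> 'a \<Rightarrow> dfun) \<Rightarrow> (dfun \<Rightarrow> dfun \<Rightarrow> dfun)
    \<Rightarrow> ('a \<Rightarrow> dfun) set" where
  "Pi_space G D st = {f \<in> extensional G. prob_lipschitz G D st f \<and>
     (\<exists>a. pm_cauchy G D a \<and> (\<forall>x\<in>G. wconv (\<lambda>n. D (a n) x) (f x) sequentially))}"

text \<open>Dsup(f,g) = sup over x in G of f(x) star g(x); the supremum in Delta_plus is pointwise.\<close>
definition Dsup :: "'a set \<Rightarrow> (dfun \<Rightarrow> dfun \<Rightarrow> dfun) \<Rightarrow> ('a \<Rightarrow> dfun) \<Rightarrow> ('a \<Rightarrow> dfun) \<Rightarrow> dfun" where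
  "Dsup G st f g = (\<lambda>t. SUP x\<in>G. st (f x) (g x) t)"

end

theory Submission
  imports Defs "HOL-Probability.Helly_Selection"
begin


lemma DP_D:
  assumes "F \<in> Delta_plus"
  shows "mono F" "\<And>t. 0 \<le> F t" "\<And>t. F t \<le> 1" "F (-\<infinity>) = 0" "F \<infinity> = 1"
    "F (ereal 0) = 0" "\<And>t::real. continuous (at_left t) (\<lambda>x. F (ereal x))"
  using assms unfolding Delta_plus_def distribution_fun_def by auto

lemma DP_nonpos: "F \<in> Delta_plus \<Longrightarrow> t \<le> ereal 0 \<Longrightarrow> F t = 0"
  using DP_D[of F] by (metis antisym monoD)

lemma DP_mono: "F \<in> Delta_plus \<Longrightarrow> s \<le> t \<Longrightarrow> F s \<le> F t"
  using DP_D(1) monoD by blast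

lemma DP_le_H0: "F \<in> Delta_plus \<Longrightarrow> F \<le> H0"
  unfolding le_fun_def H0_def
proof
  fix x assume F: "F \<in> Delta_plus"
  show "F x \<le> (if x \<le> 0 then 0 else 1)"
    using DP_nonpos[OF F, of x] DP_D(3)[OF F, of x] by (auto simp: zero_ereal_def)
qed

lemma H0_real: "H0 (ereal x) = (if x \<le> 0 then 0 else 1)"
  by (simp add: H0_def zero_ereal_def)

lemma H0_DP: "H0 \<in> Delta_plus"
  unfolding Delta_plus_def distribution_fun_def
proof (intro CollectI conjI allI)
  show "mono H0" unfolding mono_def H0_def by auto
  fix t :: real
  show "continuous (at_left t) (\<lambda>x. H0 (ereal x))"
  proof (cases "t \<le> 0")
    case True
    have "eventually (\<lambda>x. H0 (ereal x) = H0 (ereal t)) (at_left t)"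
      using True by (auto simp: eventually_at_left_field H0_real intro!: exI[of _ "t - 1"])
    then show ?thesis unfolding continuous_within
      by (rule tendsto_eventually)
  next
    case False
    have "eventually (\<lambda>x. H0 (ereal x) = H0 (ereal t)) (at_left t)"
      using False by (auto simp: eventually_at_left_field H0_real intro!: exI[of _ "0"])
    then show ?thesis unfolding continuous_within
      by (rule tendsto_eventually)
  qed
qed (auto simp: H0_def)

lemma dense_avoid:
  fixes t e :: real
  assumes "countable N" "e > 0"
  shows "\<exists>s. t - e < s \<and> s < t \<and> s \<notin> N"
proof -
  have "uncountable {t-e<..<t}" using assms by (simp add: uncountable_open_interval)
  then have "{t-e<..<t} - N \<noteq> {}" using assms(1)
    by (metis Diff_eq_empty_iff countable_subset)
  then show ?thesis by auto
qed

lemma DP_discont: "F \<in> Delta_plus \<Longrightarrow> countable {t. \<not> isCont (\<lambda>x. F (ereal x)) t}"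
  by (rule mono_ctble_discont) (auto simp: mono_def intro: DP_mono)

lemma DP_le_by_points:
  assumes F: "F \<in> Delta_plus" and L: "L \<in> Delta_plus"
    and le: "\<And>t. isCont (\<lambda>x. F (ereal x)) t \<Longrightarrow> isCont (\<lambda>x. L (ereal x)) t \<Longrightarrow> F (ereal t) \<le> L (ereal t)"
  shows "F \<le> L"
  unfolding le_fun_def
proof
  fix u :: ereal
  show "F u \<le> L u"
  proof (cases u)
    case (real t)
    show ?thesis
    proof (rule ccontr)
      assume "\<not> F u \<le> L u"
      then have lt: "L (ereal t) < F (ereal t)" using real by simp
      have "((\<lambda>x. F (ereal x)) \<longlongrightarrow> F (ereal t)) (at_left t)"
        using DP_D(7)[OF F, of t] by (simp add: continuous_within)
      then have "eventually (\<lambda>x. F (ereal x) > L (ereal t)) (at_left t)"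
        using lt by (rule order_tendstoD)
      then obtain b where b: "b < t" "\<And>y. b < y \<Longrightarrow> y < t \<Longrightarrow> F (ereal y) > L (ereal t)"
        by (auto simp: eventually_at_left_field)
      have "countable ({x. \<not> isCont (\<lambda>x. F (ereal x)) x} \<union> {x. \<not> isCont (\<lambda>x. L (ereal x)) x})"
        using DP_discont[OF F] DP_discont[OF L] by auto
      from dense_avoid[OF this, of "t - b" t] b(1) obtain s where
        s: "b < s" "s < t" "isCont (\<lambda>x. F (ereal x)) s" "isCont (\<lambda>x. L (ereal x)) s" by auto
      have "F (ereal s) \<le> L (ereal s)" using le s by auto
      also have "\<dots> \<le> L (ereal t)" using DP_mono[OF L] s by auto
      finally show False using b(2)[OF s(1,2)] by simp
    qed
  next
    case PInf then show ?thesis using DP_D(5)[OF F] DP_D(5)[OF L] by simp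
  next
    case MInf then show ?thesis using DP_D(4)[OF F] DP_D(2)[OF L] by simp
  qed
qed

lemma wconv_le:
  assumes F: "F \<in> Delta_plus" and L: "L \<in> Delta_plus"
    and wF: "wconv Fs F sequentially" and wL: "wconv Ls L sequentially"
    and le: "eventually (\<lambda>n. Fs n \<le> Ls n) sequentially"
  shows "F \<le> L"
proof (rule DP_le_by_points[OF F L])
  fix t assume "isCont (\<lambda>x. F (ereal x)) t" "isCont (\<lambda>x. L (ereal x)) t"
  then have "(\<lambda>n. Fs n (ereal t)) \<longlonglongrightarrow> F (ereal t)" "(\<lambda>n. Ls n (ereal t)) \<longlonglongrightarrow> L (ereal t)"
    using wF wL unfolding wconv_def by auto
  moreover have "eventually (\<lambda>n. Fs n (ereal t) \<le> Ls n (ereal t)) sequentially"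
    using le by eventually_elim (simp add: le_fun_def)
  ultimately show "F (ereal t) \<le> L (ereal t)" by (intro tendsto_le[OF trivial_limit_sequentially]) auto
qed

lemma wconv_const: "wconv (\<lambda>n. F) F Flt"
  unfolding wconv_def by simp

lemma wconv_H0_iff:
  assumes "\<And>i. Fs i \<in> Delta_plus"
  shows "wconv Fs H0 Flt \<longleftrightarrow> (\<forall>t>0. \<forall>e>0. eventually (\<lambda>i. Fs i (ereal t) > 1 - e) Flt)"
proof
  assume w: "wconv Fs H0 Flt"
  show "\<forall>t>0. \<forall>e>0. eventually (\<lambda>i. Fs i (ereal t) > 1 - e) Flt"
  proof (intro allI impI)
    fix t e :: real assume t: "t > 0" and e: "e > 0"
    have "eventually (\<lambda>x. H0 (ereal x) = 1) (nhds t)"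
      using t eventually_nhds_in_open[of "{0<..}" t] by (auto elim!: eventually_mono simp: H0_real)
    then have "isCont (\<lambda>x. H0 (ereal x)) t"
      unfolding isCont_def using t by (auto simp: H0_real intro: tendsto_eventually eventually_at_filter[THEN iffD2] eventually_mono)
    then have "((\<lambda>i. Fs i (ereal t)) \<longlongrightarrow> 1) Flt" using w t unfolding wconv_def by (auto simp: H0_real)
    then show "eventually (\<lambda>i. Fs i (ereal t) > 1 - e) Flt"
      using e by (intro order_tendstoD) auto
  qed
next
  assume H: "\<forall>t>0. \<forall>e>0. eventually (\<lambda>i. Fs i (ereal t) > 1 - e) Flt"
  show "wconv Fs H0 Flt" unfolding wconv_def
  proof (intro allI impI)
    fix t :: real
    show "((\<lambda>i. Fs i (ereal t)) \<longlongrightarrow> H0 (ereal t)) Flt"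
    proof (cases "t \<le> 0")
      case True
      then have "\<And>i. Fs i (ereal t) = H0 (ereal t)" using DP_nonpos[OF assms] by (simp add: H0_real)
      then show ?thesis by simp
    next
      case False
      show ?thesis unfolding tendsto_iff
      proof (intro allI impI)
        fix e :: real assume "e > 0"
        then have "eventually (\<lambda>i. 1 - e < Fs i (ereal t)) Flt" using H False by auto
        then show "eventually (\<lambda>i. dist (Fs i (ereal t)) (H0 (ereal t)) < e) Flt"
        proof (rule eventually_mono)
          fix i assume "1 - e < Fs i (ereal t)"
          then show "dist (Fs i (ereal t)) (H0 (ereal t)) < e"
            using False DP_D(3)[OF assms, of i "ereal t"] by (simp add: H0_real dist_real_def)
        qed
      qed
    qed
  qed
qed



lemma st_DP: "triangle_fun st \<Longrightarrow> F \<in> Delta_plus \<Longrightarrow> L \<in> Delta_plus \<Longrightarrow> st F L \<in> Delta_plus"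
  unfolding triangle_fun_def by blast
lemma st_comm: "triangle_fun st \<Longrightarrow> F \<in> Delta_plus \<Longrightarrow> L \<in> Delta_plus \<Longrightarrow> st F L = st L F"
  unfolding triangle_fun_def by blast
lemma st_assoc: "triangle_fun st \<Longrightarrow> F \<in> Delta_plus \<Longrightarrow> L \<in> Delta_plus \<Longrightarrow> K \<in> Delta_plus
   \<Longrightarrow> st (st F L) K = st F (st L K)"
  unfolding triangle_fun_def by blast
lemma st_H0: "triangle_fun st \<Longrightarrow> F \<in> Delta_plus \<Longrightarrow> st F H0 = F"
  unfolding triangle_fun_def by blast
lemma st_H0': "triangle_fun st \<Longrightarrow> F \<in> Delta_plus \<Longrightarrow> st H0 F = F"
  using st_H0 st_comm H0_DP by metis
lemma st_mono1: "triangle_fun st \<Longrightarrow> F \<in> Delta_plus \<Longrightarrow> F' \<in> Delta_plus \<Longrightarrow> L \<in> Delta_plus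
   \<Longrightarrow> F \<le> F' \<Longrightarrow> st F L \<le> st F' L"
  unfolding triangle_fun_def by blast
lemma st_mono: "triangle_fun st \<Longrightarrow> F \<in> Delta_plus \<Longrightarrow> F' \<in> Delta_plus \<Longrightarrow> L \<in> Delta_plus
   \<Longrightarrow> L' \<in> Delta_plus \<Longrightarrow> F \<le> F' \<Longrightarrow> L \<le> L' \<Longrightarrow> st F L \<le> st F' L'"
proof -
  assume a: "triangle_fun st" "F \<in> Delta_plus" "F' \<in> Delta_plus" "L \<in> Delta_plus"
    "L' \<in> Delta_plus" "F \<le> F'" "L \<le> L'"
  have "st F L \<le> st F' L" using st_mono1 a by blast
  also have "\<dots> = st L F'" using st_comm a by blast
  also have "\<dots> \<le> st L' F'" using st_mono1 a by blast
  also have "\<dots> = st F' L'" using st_comm a by blast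
  finally show ?thesis .
qed
lemma st_le_left: "triangle_fun st \<Longrightarrow> F \<in> Delta_plus \<Longrightarrow> L \<in> Delta_plus \<Longrightarrow> st F L \<le> F"
  using st_mono[of st F F L H0] st_H0 H0_DP DP_le_H0 by (metis order_refl)
lemma st_le_right: "triangle_fun st \<Longrightarrow> F \<in> Delta_plus \<Longrightarrow> L \<in> Delta_plus \<Longrightarrow> st F L \<le> L"
  using st_le_left st_comm by metis

lemma ctf_tf: "continuous_triangle_fun st \<Longrightarrow> triangle_fun st"
  unfolding continuous_triangle_fun_def by blast

lemma st_cont:
  assumes "continuous_triangle_fun st" "\<And>n. Fs n \<in> Delta_plus" "\<And>n. Ls n \<in> Delta_plus"
    "F \<in> Delta_plus" "L \<in> Delta_plus" "wconv Fs F sequentially" "wconv Ls L sequentially"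
  shows "wconv (\<lambda>n. st (Fs n) (Ls n)) (st F L) sequentially"
  using assms unfolding continuous_triangle_fun_def by blast

lemma good_H0:
  assumes "\<And>k. Fs k \<in> Delta_plus" "\<And>k. r k > 0" "r \<longlonglongrightarrow> 0"
    "\<And>k. Fs k (ereal (r k)) > 1 - r k"
  shows "wconv Fs H0 sequentially"
  unfolding wconv_H0_iff[OF assms(1)]
proof (intro allI impI)
  fix t e :: real assume "t > 0" "e > 0"
  then have "eventually (\<lambda>k. r k < min t e) sequentially"
    using assms(3) by (intro order_tendstoD) auto
  then show "eventually (\<lambda>k. Fs k (ereal t) > 1 - e) sequentially"
  proof (rule eventually_mono)
    fix k assume "r k < min t e"
    then have "Fs k (ereal (r k)) \<le> Fs k (ereal t)" by (intro DP_mono[OF assms(1)]) auto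
    then show "Fs k (ereal t) > 1 - e" using assms(4)[of k] \<open>r k < min t e\<close> by auto
  qed
qed

lemma inv_Suc_tendsto: "(\<lambda>k. 1 / real (Suc k)) \<longlonglongrightarrow> 0"
  using LIMSEQ_Suc[OF lim_inverse_n'] by (simp add: divide_inverse)

lemma UC:
  assumes ct: "continuous_triangle_fun st" and t: "t > 0" and e: "e > 0"
  shows "\<exists>\<eta>>0. \<forall>F\<in>Delta_plus. \<forall>L\<in>Delta_plus. F (ereal \<eta>) > 1 - \<eta> \<longrightarrow> L (ereal \<eta>) > 1 - \<eta>
     \<longrightarrow> st F L (ereal t) > 1 - e"
proof (rule ccontr)
  assume "\<not> ?thesis"
  then have "\<forall>k::nat. \<exists>F L. F \<in> Delta_plus \<and> L \<in> Delta_plus \<and> F (ereal (1 / real (Suc k))) > 1 - 1 / real (Suc k)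
     \<and> L (ereal (1 / real (Suc k))) > 1 - 1 / real (Suc k) \<and> st F L (ereal t) \<le> 1 - e"
    by (metis not_less of_nat_0_less_iff zero_less_Suc zero_less_divide_1_iff)
  then obtain Fs Ls where FL: "\<And>k. Fs k \<in> Delta_plus" "\<And>k. Ls k \<in> Delta_plus"
    "\<And>k. Fs k (ereal (1 / real (Suc k))) > 1 - 1 / real (Suc k)"
    "\<And>k. Ls k (ereal (1 / real (Suc k))) > 1 - 1 / real (Suc k)"
    "\<And>k. st (Fs k) (Ls k) (ereal t) \<le> 1 - e"
    by metis
  have "wconv Fs H0 sequentially" "wconv Ls H0 sequentially"
    using FL inv_Suc_tendsto by (auto intro!: good_H0)
  then have "wconv (\<lambda>k. st (Fs k) (Ls k)) (st H0 H0) sequentially"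
    using FL by (intro st_cont[OF ct]) (auto simp: H0_DP)
  then have "wconv (\<lambda>k. st (Fs k) (Ls k)) H0 sequentially"
    using st_H0[OF ctf_tf[OF ct] H0_DP] by simp
  then have "eventually (\<lambda>k. st (Fs k) (Ls k) (ereal t) > 1 - e) sequentially"
    using wconv_H0_iff[of "\<lambda>k. st (Fs k) (Ls k)"] FL st_DP[OF ctf_tf[OF ct]] t e by auto
  then obtain k where "st (Fs k) (Ls k) (ereal t) > 1 - e" by (auto simp: eventually_sequentially)
  then show False using FL(5)[of k] by simp
qed



lemma left_to_right:
  fixes f :: "real \<Rightarrow> real"
  assumes "continuous (at_left (-x)) f"
  shows "continuous (at_right x) (\<lambda>y. - f (-y))"
proof -
  have "(f \<longlongrightarrow> f (-x)) (at_left (-x))" using assms by (simp add: continuous_within)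
  then have "((\<lambda>z. - f (- (- z))) \<longlongrightarrow> - f (-x)) (at_left (-x))" by (simp add: tendsto_minus)
  then have "((\<lambda>y. - f (- y)) \<longlongrightarrow> - f (-x)) (filtermap uminus (at_left (-x)))"
    by (simp add: filterlim_filtermap)
  then show ?thesis unfolding continuous_within by (subst at_right_minus) simp
qed

lemma right_to_left:
  fixes f :: "real \<Rightarrow> real"
  assumes "continuous (at_right (-x)) f"
  shows "continuous (at_left x) (\<lambda>y. - f (-y))"
proof -
  have "(f \<longlongrightarrow> f (-x)) (at_right (-x))" using assms by (simp add: continuous_within)
  then have "((\<lambda>z. - f (- (- z))) \<longlongrightarrow> - f (-x)) (at_right (-x))" by (simp add: tendsto_minus)
  then have "((\<lambda>y. - f (- y)) \<longlongrightarrow> - f (-x)) (filtermap uminus (at_right (-x)))"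
    by (simp add: filterlim_filtermap)
  then show ?thesis unfolding continuous_within by (subst at_left_minus) simp
qed

lemma dense_avoid_right:
  fixes t e :: real
  assumes "countable N" "e > 0"
  shows "\<exists>s. t < s \<and> s < t + e \<and> s \<notin> N"
  using dense_avoid[OF assms, of "t + e"] by auto

lemma HS:
  fixes Ls :: "nat \<Rightarrow> dfun"
  assumes Ls: "\<And>n. Ls n \<in> Delta_plus"
  shows "\<exists>s L. strict_mono s \<and> L \<in> Delta_plus \<and> wconv (\<lambda>n. Ls (s n)) L sequentially"
proof -
  define g where "g n x = - Ls n (ereal (-x))" for n x
  have rc: "continuous (at_right x) (g n)" for n x
    unfolding g_def using left_to_right[OF DP_D(7)[OF Ls[of n], of "-x"]] by simp
  have mo: "mono (g n)" for n
    unfolding g_def mono_def using DP_mono[OF Ls] by auto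
  have bd: "\<bar>g n x\<bar> \<le> 1" for n x
    unfolding g_def using DP_D(2,3)[OF Ls] by (simp add: abs_le_iff)
  obtain s F where s: "strict_mono s" and Frc: "\<And>x. continuous (at_right x) F" and Fm: "mono F"
    and Fb: "\<And>x. \<bar>F x\<bar> \<le> 1" and Fc: "\<And>x. isCont F x \<Longrightarrow> (\<lambda>n. g (s n) x) \<longlonglongrightarrow> F x"
    using Helly_selection[of g 1, OF rc mo bd] by blast
  have cF: "countable {x. \<not> isCont F x}" by (rule mono_ctble_discont[OF Fm])
  have Fle0: "F x \<le> 0" for x
  proof -
    obtain y where y: "x < y" "isCont F y" using dense_avoid_right[OF cF zero_less_one, of x] by auto
    have "F y \<le> 0"
      using Fc[OF y(2)] by (rule LIMSEQ_le_const2) (auto simp: g_def intro: DP_D(2)[OF Ls])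
    then show ?thesis using Fm y(1) by (meson monoD less_imp_le order_trans)
  qed
  have F0: "F 0 = 0"
  proof (rule ccontr)
    assume "F 0 \<noteq> 0"
    then have "F 0 < 0" using Fle0[of 0] by simp
    then have "eventually (\<lambda>y. F y < 0) (at_right 0)"
      using Frc[of 0] by (auto simp: continuous_within intro: order_tendstoD)
    then obtain b where b: "b > 0" "\<And>y. 0 < y \<Longrightarrow> y < b \<Longrightarrow> F y < 0"
      by (auto simp: eventually_at_right_field)
    obtain y where y: "0 < y" "y < 0 + b" "isCont F y" using dense_avoid_right[OF cF b(1), of 0] by auto
    have "\<And>n. g (s n) y = 0" unfolding g_def using y by (simp add: DP_nonpos[OF Ls])
    then have "(\<lambda>n. 0::real) \<longlonglongrightarrow> F y" using Fc[OF y(3)] by simp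
    then have "F y = 0" by (simp add: LIMSEQ_const_iff)
    then show False using b(2)[OF y(1)] y by simp
  qed
  define L where "L u = (if u = \<infinity> then 1 else if u = -\<infinity> then 0 else - F (- real_of_ereal u))" for u
  have Lr: "L (ereal t) = - F (- t)" for t by (simp add: L_def)
  have L01: "0 \<le> L u \<and> L u \<le> 1" for u
    using Fle0[of "- real_of_ereal u"] Fb[of "- real_of_ereal u"] by (auto simp: L_def)
  have LDP: "L \<in> Delta_plus"
    unfolding Delta_plus_def distribution_fun_def
  proof (intro CollectI conjI allI)
    show "mono L" unfolding mono_def
    proof (intro allI impI)
      fix u v :: ereal assume "u \<le> v"
      then show "L u \<le> L v"
      proof (cases u; cases v)
        fix a b assume "u = ereal a" "v = ereal b"
        then show ?thesis using \<open>u \<le> v\<close> Fm by (simp add: Lr monoD)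
      qed (use Fle0 Fb in \<open>auto simp: L_def abs_le_iff\<close>)
    qed
    fix t :: real
    show "continuous (at_left t) (\<lambda>x. L (ereal x))"
      using right_to_left[OF Frc[of "-t"]] by (simp add: Lr)
  qed (use L01 F0 in \<open>auto simp: L_def zero_ereal_def\<close>)
  have "wconv (\<lambda>n. Ls (s n)) L sequentially"
    unfolding wconv_def
  proof (intro allI impI)
    fix t assume "isCont (\<lambda>x. L (ereal x)) t"
    then have c1: "isCont (\<lambda>x. - F (- x)) t" by (simp add: Lr)
    have c2: "isCont ((\<lambda>x. - F (- x)) \<circ> uminus) (-t)"
      by (rule continuous_at_compose) (simp_all add: c1)
    then have "isCont (\<lambda>y. - ((\<lambda>x. - F (- x)) \<circ> uminus) y) (-t)" by (rule isCont_minus)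
    then have "isCont F (-t)" by (simp add: o_def)
    from Fc[OF this] have "(\<lambda>n. - Ls (s n) (ereal t)) \<longlonglongrightarrow> F (-t)" by (simp add: g_def)
    then have "(\<lambda>n. - (- Ls (s n) (ereal t))) \<longlonglongrightarrow> - F (-t)" by (rule tendsto_minus)
    then show "(\<lambda>n. Ls (s n) (ereal t)) \<longlonglongrightarrow> L (ereal t)" by (simp add: Lr)
  qed
  then show ?thesis using s LDP by blast
qed



lemma pm_D:
  assumes "pm_space G D st"
  shows "triangle_fun st" "\<And>p q. p \<in> G \<Longrightarrow> q \<in> G \<Longrightarrow> D p q \<in> Delta_plus"
    "\<And>p q. p \<in> G \<Longrightarrow> q \<in> G \<Longrightarrow> D p q = H0 \<longleftrightarrow> p = q"
    "\<And>p q. p \<in> G \<Longrightarrow> q \<in> G \<Longrightarrow> D p q = D q p"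
    "\<And>p q r. p \<in> G \<Longrightarrow> q \<in> G \<Longrightarrow> r \<in> G \<Longrightarrow> st (D p q) (D q r) \<le> D p r"
  using assms unfolding pm_space_def by metis+

lemma cauchy_eps:
  assumes pm: "pm_space G D st" and c: "pm_cauchy G D a" and t: "t > 0" and e: "e > 0"
  shows "\<exists>N. \<forall>n\<ge>N. \<forall>p\<ge>N. D (a n) (a p) (ereal t) > 1 - e"
proof -
  have aG: "\<And>n. a n \<in> G" using c unfolding pm_cauchy_def by blast
  have w: "wconv (\<lambda>(n, p). D (a n) (a p)) H0 (sequentially \<times>\<^sub>F sequentially)"
    using c unfolding pm_cauchy_def by blast
  have "\<And>i. (\<lambda>(n, p). D (a n) (a p)) i \<in> Delta_plus"
    using pm_D(2)[OF pm] aG by (simp add: case_prod_beta)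
  from w[unfolded wconv_H0_iff[OF this]] t e
  have "eventually (\<lambda>i. (\<lambda>(n, p). D (a n) (a p)) i (ereal t) > 1 - e) (sequentially \<times>\<^sub>F sequentially)"
    by blast
  then have "\<exists>N. \<forall>m\<ge>N. \<forall>n\<ge>N. D (a n) (a m) (ereal t) > 1 - e"
    unfolding eventually_prod_sequentially by simp
  then show ?thesis by blast
qed

lemma aux_arith: "(A::real) \<le> B \<Longrightarrow> C \<le> Dd \<Longrightarrow> E \<le> F \<Longrightarrow> B < C + e/2 \<Longrightarrow> Dd - e/2 < E \<Longrightarrow> F < A - e \<Longrightarrow> False"
  by (smt (verit) field_sum_of_halves)

lemma aux2: "(a::real) - e/4 \<le> b \<Longrightarrow> b \<le> x \<Longrightarrow> x - e/4 \<le> c \<Longrightarrow> c \<le> d \<Longrightarrow> \<bar>a - A\<bar> < e/4 \<Longrightarrow> \<bar>d - B\<bar> < e/4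
  \<Longrightarrow> \<bar>A - y\<bar> < e/4 \<Longrightarrow> \<bar>B - y\<bar> < e/4 \<Longrightarrow> \<bar>x - y\<bar> < e"
  unfolding abs_less_iff by linarith

lemma UNIF:
  assumes ct: "continuous_triangle_fun st" and tt: "t < t'" and e: "e > 0"
  shows "\<exists>\<eta>>0. \<forall>F\<in>Delta_plus. \<forall>L\<in>Delta_plus. F (ereal \<eta>) > 1 - \<eta> \<longrightarrow> st F L (ereal t') \<ge> L (ereal t) - e"
proof (rule ccontr)
  have tf: "triangle_fun st" by (rule ctf_tf[OF ct])
  assume neg: "\<not> ?thesis"
  have "\<exists>F L. F \<in> Delta_plus \<and> L \<in> Delta_plus \<and> F (ereal (1 / real (Suc k))) > 1 - 1 / real (Suc k)
     \<and> st F L (ereal t') < L (ereal t) - e" for k :: nat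
  proof (rule ccontr)
    assume nk: "\<not> (\<exists>F L. F \<in> Delta_plus \<and> L \<in> Delta_plus \<and> F (ereal (1 / real (Suc k))) > 1 - 1 / real (Suc k)
     \<and> st F L (ereal t') < L (ereal t) - e)"
    have pos: "(1 / real (Suc k)) > 0" by simp
    have hk: "\<forall>F\<in>Delta_plus. \<forall>L\<in>Delta_plus. F (ereal (1 / real (Suc k))) > 1 - 1 / real (Suc k)
       \<longrightarrow> st F L (ereal t') \<ge> L (ereal t) - e" using nk by (meson not_less)
    from neg show False by (rule notE) (intro exI[of _ "1 / real (Suc k)"] conjI pos hk)
  qed
  then have "\<forall>k::nat. \<exists>F L. F \<in> Delta_plus \<and> L \<in> Delta_plus \<and> F (ereal (1 / real (Suc k))) > 1 - 1 / real (Suc k)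
     \<and> st F L (ereal t') < L (ereal t) - e" by blast
  then obtain Fs where "\<forall>k. \<exists>L. Fs k \<in> Delta_plus \<and> L \<in> Delta_plus \<and> Fs k (ereal (1 / real (Suc k))) > 1 - 1 / real (Suc k)
     \<and> st (Fs k) L (ereal t') < L (ereal t) - e" by (rule choice[THEN exE])
  then obtain Ls where FLa: "\<forall>k. Fs k \<in> Delta_plus \<and> Ls k \<in> Delta_plus \<and> Fs k (ereal (1 / real (Suc k))) > 1 - 1 / real (Suc k)
     \<and> st (Fs k) (Ls k) (ereal t') < Ls k (ereal t) - e" by (rule choice[THEN exE])
  then have FL: "\<And>k. Fs k \<in> Delta_plus" "\<And>k. Ls k \<in> Delta_plus"
    "\<And>k. Fs k (ereal (1 / real (Suc k))) > 1 - 1 / real (Suc k)"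
    "\<And>k. st (Fs k) (Ls k) (ereal t') < Ls k (ereal t) - e"
    by auto
  obtain s Lst where s: "strict_mono s" and Lst: "Lst \<in> Delta_plus" and wL: "wconv (\<lambda>n. Ls (s n)) Lst sequentially"
    using HS[of Ls] FL(2) by blast
  have "(\<lambda>n. 1 / real (Suc (s n))) \<longlonglongrightarrow> 0"
    using LIMSEQ_subseq_LIMSEQ[OF inv_Suc_tendsto s] by (simp add: o_def)
  then have wF: "wconv (\<lambda>n. Fs (s n)) H0 sequentially"
    using FL by (intro good_H0[where r = "\<lambda>n. 1 / real (Suc (s n))"]) auto
  have "wconv (\<lambda>n. st (Fs (s n)) (Ls (s n))) (st H0 Lst) sequentially"
    using FL Lst H0_DP by (intro st_cont[OF ct _ _ _ _ wF wL]) auto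
  then have wS: "wconv (\<lambda>n. st (Fs (s n)) (Ls (s n))) Lst sequentially"
    using st_H0'[OF tf Lst] by simp
  obtain \<tau>2 where t2: "t' - (t' - t) / 2 < \<tau>2" "\<tau>2 < t'" "isCont (\<lambda>x. Lst (ereal x)) \<tau>2"
    using dense_avoid[OF DP_discont[OF Lst], of "(t' - t) / 2" t'] tt by auto
  have tt2: "t < \<tau>2" using t2(1) tt by (simp add: field_simps)
  obtain \<tau>1 where t1: "\<tau>2 - (\<tau>2 - t) < \<tau>1" "\<tau>1 < \<tau>2" "isCont (\<lambda>x. Lst (ereal x)) \<tau>1"
    using dense_avoid[OF DP_discont[OF Lst], of "\<tau>2 - t" \<tau>2] tt2 by auto
  have "(\<lambda>n. Ls (s n) (ereal \<tau>1)) \<longlonglongrightarrow> Lst (ereal \<tau>1)" using wL t1 unfolding wconv_def by auto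
  then have ev1: "eventually (\<lambda>n. Ls (s n) (ereal \<tau>1) < Lst (ereal \<tau>1) + e / 2) sequentially"
    using e by (intro order_tendstoD) auto
  have "(\<lambda>n. st (Fs (s n)) (Ls (s n)) (ereal \<tau>2)) \<longlonglongrightarrow> Lst (ereal \<tau>2)" using wS t2 unfolding wconv_def by auto
  then have ev2: "eventually (\<lambda>n. st (Fs (s n)) (Ls (s n)) (ereal \<tau>2) > Lst (ereal \<tau>2) - e / 2) sequentially"
    using e by (intro order_tendstoD) auto
  obtain n where n1: "Ls (s n) (ereal \<tau>1) < Lst (ereal \<tau>1) + e / 2"
    and n2: "st (Fs (s n)) (Ls (s n)) (ereal \<tau>2) > Lst (ereal \<tau>2) - e / 2"
    using eventually_conj[OF ev1 ev2] by (auto simp: eventually_sequentially)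
  have SD: "st (Fs (s n)) (Ls (s n)) \<in> Delta_plus" using st_DP[OF tf FL(1,2)] .
  have "Ls (s n) (ereal t) \<le> Ls (s n) (ereal \<tau>1)" using t1 by (intro DP_mono[OF FL(2)]) auto
  moreover have "Lst (ereal \<tau>1) \<le> Lst (ereal \<tau>2)" using t1 by (intro DP_mono[OF Lst]) auto
  moreover have "st (Fs (s n)) (Ls (s n)) (ereal \<tau>2) \<le> st (Fs (s n)) (Ls (s n)) (ereal t')"
    using t2 by (intro DP_mono[OF SD]) auto
  moreover note n1 n2 FL(4)[of "s n"]
  ultimately show False by (rule aux_arith)
qed

lemma EX:
  assumes pm: "pm_space G D st" and ct: "continuous_triangle_fun st" and c: "pm_cauchy G D a"
    and x: "x \<in> G"
  shows "\<exists>F\<in>Delta_plus. wconv (\<lambda>n. D (a n) x) F sequentially"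
proof -
  have tf: "triangle_fun st" by (rule ctf_tf[OF ct])
  have aG: "\<And>n. a n \<in> G" using c unfolding pm_cauchy_def by blast
  define u where "u n = D (a n) x" for n
  have uD: "u n \<in> Delta_plus" for n unfolding u_def using pm_D(2)[OF pm aG x] .
  have tri: "st (D (a n) (a p)) (u p) \<le> u n" for n p unfolding u_def using pm_D(5)[OF pm aG aG x] .
  have aD: "D (a n) (a p) \<in> Delta_plus" for n p using pm_D(2)[OF pm aG aG] .
  obtain s U where s: "strict_mono s" and U: "U \<in> Delta_plus" and wU: "wconv (\<lambda>n. u (s n)) U sequentially"
    using HS[of u] uD by blast
  have "wconv u U sequentially" unfolding wconv_def
  proof (intro allI impI)
    fix t assume ct_t: "isCont (\<lambda>x. U (ereal x)) t"
    show "(\<lambda>n. u n (ereal t)) \<longlonglongrightarrow> U (ereal t)" unfolding tendsto_iff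
    proof (intro allI impI)
      fix e :: real assume e: "e > 0"
      have e4: "e / 4 > 0" using e by simp
      obtain \<delta> where \<delta>: "\<delta> > 0"
        "\<And>y. y \<noteq> t \<Longrightarrow> norm (y - t) < \<delta> \<Longrightarrow> norm (U (ereal y) - U (ereal t)) < e / 4"
        using ct_t[unfolded isCont_def LIM_eq, rule_format, OF e4] by blast
      obtain \<tau> where \<tau>: "t - \<delta> < \<tau>" "\<tau> < t" "isCont (\<lambda>x. U (ereal x)) \<tau>"
        using dense_avoid[OF DP_discont[OF U] \<delta>(1), of t] by blast
      obtain \<tau>' where \<tau>': "t < \<tau>'" "\<tau>' < t + \<delta>" "isCont (\<lambda>x. U (ereal x)) \<tau>'"
        using dense_avoid_right[OF DP_discont[OF U] \<delta>(1), of t] by blast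
      have "norm (\<tau> - t) < \<delta>" "\<tau> \<noteq> t" using \<tau> by simp_all
      then have U1: "\<bar>U (ereal \<tau>) - U (ereal t)\<bar> < e / 4" using \<delta>(2)[of \<tau>] by simp
      have "norm (\<tau>' - t) < \<delta>" "\<tau>' \<noteq> t" using \<tau>' by simp_all
      then have U2: "\<bar>U (ereal \<tau>') - U (ereal t)\<bar> < e / 4" using \<delta>(2)[of \<tau>'] by simp
      obtain \<eta>1 where \<eta>1: "\<eta>1 > 0" "\<forall>F\<in>Delta_plus. \<forall>L\<in>Delta_plus. F (ereal \<eta>1) > 1 - \<eta>1
          \<longrightarrow> st F L (ereal t) \<ge> L (ereal \<tau>) - e / 4"
        using UNIF[OF ct \<tau>(2) e4] by blast
      obtain \<eta>2 where \<eta>2: "\<eta>2 > 0" "\<forall>F\<in>Delta_plus. \<forall>L\<in>Delta_plus. F (ereal \<eta>2) > 1 - \<eta>2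
          \<longrightarrow> st F L (ereal \<tau>') \<ge> L (ereal t) - e / 4"
        using UNIF[OF ct \<tau>'(1) e4] by blast
      obtain N1 where N1: "\<And>n p. n \<ge> N1 \<Longrightarrow> p \<ge> N1 \<Longrightarrow> D (a n) (a p) (ereal \<eta>1) > 1 - \<eta>1"
        using cauchy_eps[OF pm c \<eta>1(1) \<eta>1(1)] by blast
      obtain N2 where N2: "\<And>n p. n \<ge> N2 \<Longrightarrow> p \<ge> N2 \<Longrightarrow> D (a n) (a p) (ereal \<eta>2) > 1 - \<eta>2"
        using cauchy_eps[OF pm c \<eta>2(1) \<eta>2(1)] by blast
      have "(\<lambda>j. u (s j) (ereal \<tau>)) \<longlonglongrightarrow> U (ereal \<tau>)" "(\<lambda>j. u (s j) (ereal \<tau>')) \<longlonglongrightarrow> U (ereal \<tau>')"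
        using wU \<tau>(3) \<tau>'(3) unfolding wconv_def by auto
      then have "eventually (\<lambda>j. dist (u (s j) (ereal \<tau>)) (U (ereal \<tau>)) < e / 4) sequentially"
        "eventually (\<lambda>j. dist (u (s j) (ereal \<tau>')) (U (ereal \<tau>')) < e / 4) sequentially"
        using tendstoD e4 by blast+
      then obtain J1 J2 where J1: "\<And>j. j \<ge> J1 \<Longrightarrow> dist (u (s j) (ereal \<tau>)) (U (ereal \<tau>)) < e / 4"
        and J2: "\<And>j. j \<ge> J2 \<Longrightarrow> dist (u (s j) (ereal \<tau>')) (U (ereal \<tau>')) < e / 4"
        unfolding eventually_sequentially by blast
      define J where "J = max J1 J2"
      have J: "\<And>j. j \<ge> J \<Longrightarrow> \<bar>u (s j) (ereal \<tau>) - U (ereal \<tau>)\<bar> < e / 4"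
        "\<And>j. j \<ge> J \<Longrightarrow> \<bar>u (s j) (ereal \<tau>') - U (ereal \<tau>')\<bar> < e / 4"
        using J1 J2 unfolding J_def dist_real_def by simp_all
      show "eventually (\<lambda>n. dist (u n (ereal t)) (U (ereal t)) < e) sequentially"
        unfolding eventually_sequentially
      proof (intro exI allI impI)
        fix n assume n: "n \<ge> max N1 N2"
        define j where "j = max J n"
        have sj: "s j \<ge> n" "j \<ge> J" using seq_suble[OF s, of j] by (auto simp: j_def)
        have nN: "n \<ge> N1" "s j \<ge> N1" "n \<ge> N2" "s j \<ge> N2" using n sj by auto
        have "st (D (a n) (a (s j))) (u (s j)) (ereal t) \<ge> u (s j) (ereal \<tau>) - e / 4"
          using \<eta>1(2)[rule_format, OF aD uD N1[OF nN(1,2)]] by simp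
        moreover have "st (D (a n) (a (s j))) (u (s j)) (ereal t) \<le> u n (ereal t)"
          using tri[of n "s j"] by (simp add: le_fun_def)
        moreover have "st (D (a (s j)) (a n)) (u n) (ereal \<tau>') \<ge> u n (ereal t) - e / 4"
          using \<eta>2(2)[rule_format, OF aD uD N2[OF nN(4,3)]] by simp
        moreover have "st (D (a (s j)) (a n)) (u n) (ereal \<tau>') \<le> u (s j) (ereal \<tau>')"
          using tri[of "s j" n] by (simp add: le_fun_def)
        ultimately show "dist (u n (ereal t)) (U (ereal t)) < e"
          using J(1)[OF sj(2)] J(2)[OF sj(2)] U1 U2 unfolding dist_real_def by (rule aux2)
      qed
    qed
  qed
  then show ?thesis using U unfolding u_def by blast
qed



lemma Pi_D:
  assumes "f \<in> Pi_space G D st"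
  shows "f \<in> extensional G" "\<And>x. x \<in> G \<Longrightarrow> f x \<in> Delta_plus"
    "\<And>x y. x \<in> G \<Longrightarrow> y \<in> G \<Longrightarrow> st (D x y) (f y) \<le> f x"
    "\<exists>a. pm_cauchy G D a \<and> (\<forall>x\<in>G. wconv (\<lambda>n. D (a n) x) (f x) sequentially)"
  using assms unfolding Pi_space_def prob_lipschitz_def by blast+

lemma cauchy_G: "pm_cauchy G D a \<Longrightarrow> a n \<in> G"
  unfolding pm_cauchy_def by blast

lemma Pi_lower:
  assumes pm: "pm_space G D st" and ct: "continuous_triangle_fun st"
    and c: "pm_cauchy G D a" and w: "\<And>x. x \<in> G \<Longrightarrow> wconv (\<lambda>n. D (a n) x) (f x) sequentially"
    and fD: "\<And>x. x \<in> G \<Longrightarrow> f x \<in> Delta_plus" and x: "x \<in> G" and y: "y \<in> G"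
  shows "st (f x) (f y) \<le> D x y"
proof -
  have tf: "triangle_fun st" by (rule ctf_tf[OF ct])
  have aG: "\<And>n. a n \<in> G" using c by (rule cauchy_G)
  have "wconv (\<lambda>n. st (D (a n) x) (D (a n) y)) (st (f x) (f y)) sequentially"
    using pm_D(2)[OF pm aG x] pm_D(2)[OF pm aG y] fD[OF x] fD[OF y]
    by (intro st_cont[OF ct _ _ _ _ w[OF x] w[OF y]]) auto
  moreover have "st (D (a n) x) (D (a n) y) \<le> D x y" for n
    using pm_D(4)[OF pm aG x] pm_D(5)[OF pm x aG y] by simp
  ultimately show ?thesis
    using st_DP[OF tf fD[OF x] fD[OF y]] pm_D(2)[OF pm x y]
    by (intro wconv_le[OF _ _ _ wconv_const]) auto
qed

lemma Pi_toH0: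
  assumes pm: "pm_space G D st"
    and c: "pm_cauchy G D a" and w: "\<And>x. x \<in> G \<Longrightarrow> wconv (\<lambda>n. D (a n) x) (f x) sequentially"
    and fD: "\<And>x. x \<in> G \<Longrightarrow> f x \<in> Delta_plus"
  shows "wconv (\<lambda>m. f (a m)) H0 sequentially"
proof -
  have aG: "\<And>n. a n \<in> G" using c by (rule cauchy_G)
  have fa: "\<And>m. f (a m) \<in> Delta_plus" using fD aG by blast
  show ?thesis unfolding wconv_H0_iff[OF fa]
  proof (intro allI impI)
    fix t e :: real assume t: "t > 0" and e: "e > 0"
    obtain N where N: "\<And>n p. n \<ge> N \<Longrightarrow> p \<ge> N \<Longrightarrow> D (a n) (a p) (ereal (t/2)) > 1 - e/2"
      using cauchy_eps[OF pm c, of "t/2" "e/2"] t e by auto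
    show "eventually (\<lambda>m. f (a m) (ereal t) > 1 - e) sequentially"
      unfolding eventually_sequentially
    proof (intro exI allI impI)
      fix m assume m: "m \<ge> N"
      have t2: "t / 2 > 0" using t by simp
      obtain s where s: "t - t/2 < s" "s < t" "isCont (\<lambda>x. f (a m) (ereal x)) s"
        using dense_avoid[OF DP_discont[OF fa] t2, of t] by blast
      have "(\<lambda>n. D (a n) (a m) (ereal s)) \<longlonglongrightarrow> f (a m) (ereal s)"
        using w[OF aG] s(3) unfolding wconv_def by blast
      moreover have "\<forall>n\<ge>N. 1 - e/2 \<le> D (a n) (a m) (ereal s)"
      proof (intro allI impI)
        fix n assume "n \<ge> N"
        then have "1 - e/2 < D (a n) (a m) (ereal (t/2))" using N m by blast
        also have "\<dots> \<le> D (a n) (a m) (ereal s)"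
          using s(1) by (intro DP_mono[OF pm_D(2)[OF pm aG aG]]) simp
        finally show "1 - e/2 \<le> D (a n) (a m) (ereal s)" by simp
      qed
      ultimately have "1 - e/2 \<le> f (a m) (ereal s)" by (intro LIMSEQ_le_const) blast+
      also have "\<dots> \<le> f (a m) (ereal t)" using s(2) by (intro DP_mono[OF fa]) simp
      finally show "f (a m) (ereal t) > 1 - e" using e by simp
    qed
  qed
qed

lemma Dsup_delta:
  assumes pm: "pm_space G D st" and a: "a \<in> G" and fD: "\<And>x. x \<in> G \<Longrightarrow> f x \<in> Delta_plus"
    and lip: "\<And>x y. x \<in> G \<Longrightarrow> y \<in> G \<Longrightarrow> st (D x y) (f y) \<le> f x"
  shows "Dsup G st (pm_delta G D a) f = f a"
proof
  fix t
  have tf: "triangle_fun st" using pm_D(1)[OF pm] .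
  have "Dsup G st (pm_delta G D a) f t = (SUP x\<in>G. st (D x a) (f x) t)"
    unfolding Dsup_def pm_delta_def by (rule SUP_cong) simp_all
  also have "\<dots> = f a t"
  proof (rule cSup_eq_maximum)
    have aa: "st (D a a) (f a) = f a" using pm_D(3)[OF pm a a] st_H0'[OF tf fD[OF a]] by simp
    show "f a t \<in> (\<lambda>x. st (D x a) (f x) t) ` G"
    proof (rule image_eqI[where x = a])
      show "f a t = st (D a a) (f a) t" using aa by simp
    qed (rule a)
  next
    fix z assume "z \<in> (\<lambda>x. st (D x a) (f x) t) ` G"
    then obtain x where x: "x \<in> G" "z = st (D x a) (f x) t" by blast
    have "st (D a x) (f x) \<le> f a" using lip[OF a x(1)] .
    then show "z \<le> f a t" using x pm_D(4)[OF pm x(1) a] by (simp add: le_fun_def)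
  qed
  finally show "Dsup G st (pm_delta G D a) f t = f a t" .
qed

lemma SUP_const_on:
  assumes "G \<noteq> {}" "\<And>x. x \<in> G \<Longrightarrow> h x = c" shows "(SUP x\<in>G. h x) = (c::real)"
proof -
  have "(SUP x\<in>G. h x) = (SUP x\<in>G. c)" by (rule SUP_cong) (simp_all add: assms)
  then show ?thesis using assms(1) by simp
qed

lemma Dsup_DP:
  assumes tf: "triangle_fun st" and G: "G \<noteq> {}" and fD: "\<And>x. x \<in> G \<Longrightarrow> f x \<in> Delta_plus"
    and gD: "\<And>x. x \<in> G \<Longrightarrow> g x \<in> Delta_plus"
  shows "Dsup G st f g \<in> Delta_plus"
proof -
  define A where "A x = st (f x) (g x)" for x
  have AD: "A x \<in> Delta_plus" if "x \<in> G" for x unfolding A_def by (rule st_DP[OF tf fD[OF that] gD[OF that]])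
  have S: "Dsup G st f g t = (SUP x\<in>G. A x t)" for t unfolding Dsup_def A_def ..
  have bdd: "bdd_above ((\<lambda>x. A x t) ` G)" for t
    using DP_D(3)[OF AD] by (intro bdd_aboveI[of _ 1]) auto
  have up: "A x t \<le> Dsup G st f g t" if "x \<in> G" for x t
    unfolding S using cSUP_upper[OF that bdd] .
  have le1: "Dsup G st f g t \<le> 1" for t
    unfolding S using DP_D(3)[OF AD] by (intro cSUP_least[OF G]) auto
  obtain x0 where x0: "x0 \<in> G" using G by blast
  have ge0: "0 \<le> Dsup G st f g t" for t
    using up[OF x0, of t] DP_D(2)[OF AD[OF x0], of t] by linarith
  have mo: "Dsup G st f g s \<le> Dsup G st f g t" if "s \<le> t" for s t
    unfolding S
  proof (rule cSUP_mono[OF G bdd])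
    fix n assume "n \<in> G"
    then show "\<exists>m\<in>G. A n s \<le> A m t" using DP_mono[OF AD that] by blast
  qed
  have lc: "continuous (at_left t) (\<lambda>y. Dsup G st f g (ereal y))" for t :: real
    unfolding continuous_within tendsto_iff
  proof (intro allI impI)
    fix e :: real assume e: "e > 0"
    have "Dsup G st f g (ereal t) - e/2 < (SUP x\<in>G. A x (ereal t))" using e S by simp
    then obtain x where x: "x \<in> G" "Dsup G st f g (ereal t) - e/2 < A x (ereal t)"
      using less_cSUP_iff[OF G bdd] by blast
    have "((\<lambda>y. A x (ereal y)) \<longlongrightarrow> A x (ereal t)) (at_left t)"
      using DP_D(7)[OF AD[OF x(1)], of t] by (simp add: continuous_within)
    then have ev: "eventually (\<lambda>y. A x (ereal y) > A x (ereal t) - e/2) (at_left t)"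
      using e by (intro order_tendstoD) auto
    have ev2: "eventually (\<lambda>y. y < t) (at_left t)" by (simp add: eventually_at_filter)
    show "eventually (\<lambda>y. dist (Dsup G st f g (ereal y)) (Dsup G st f g (ereal t)) < e) (at_left t)"
      using ev ev2
    proof eventually_elim
      case (elim y)
      have "Dsup G st f g (ereal y) \<le> Dsup G st f g (ereal t)" using elim(2) by (intro mo) simp
      moreover have "A x (ereal y) \<le> Dsup G st f g (ereal y)" by (rule up[OF x(1)])
      ultimately show ?case using elim(1) x(2) by (simp add: dist_real_def abs_if)
    qed
  qed
  have v1: "Dsup G st f g (-\<infinity>) = 0" unfolding S using DP_D(4)[OF AD] by (intro SUP_const_on[OF G])
  have v2: "Dsup G st f g \<infinity> = 1" unfolding S using DP_D(5)[OF AD] by (intro SUP_const_on[OF G])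
  have v3: "Dsup G st f g (ereal 0) = 0" unfolding S using DP_D(6)[OF AD] by (intro SUP_const_on[OF G])
  show ?thesis unfolding Delta_plus_def distribution_fun_def
    using mo ge0 le1 v1 v2 v3 lc by (auto simp: mono_def)
qed

lemma Dsup_sym:
  assumes tf: "triangle_fun st" and fD: "\<And>x. x \<in> G \<Longrightarrow> f x \<in> Delta_plus"
    and gD: "\<And>x. x \<in> G \<Longrightarrow> g x \<in> Delta_plus"
  shows "Dsup G st f g = Dsup G st g f"
  unfolding Dsup_def using st_comm[OF tf fD gD] by (intro ext SUP_cong refl) simp

lemma Dsup_upper:
  assumes tf: "triangle_fun st" and fD: "\<And>x. x \<in> G \<Longrightarrow> f x \<in> Delta_plus"
    and gD: "\<And>x. x \<in> G \<Longrightarrow> g x \<in> Delta_plus" and x: "x \<in> G"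
  shows "st (f x) (g x) \<le> Dsup G st f g"
  unfolding le_fun_def Dsup_def
proof
  fix t
  have "bdd_above ((\<lambda>x. st (f x) (g x) t) ` G)"
    using DP_D(3)[OF st_DP[OF tf fD gD]] by (intro bdd_aboveI[of _ 1]) force
  then show "st (f x) (g x) t \<le> (SUP x\<in>G. st (f x) (g x) t)" by (rule cSUP_upper[OF x])
qed



lemma Dsup_less:
  assumes tf: "triangle_fun st" and G: "G \<noteq> {}" and fD: "\<And>x. x \<in> G \<Longrightarrow> f x \<in> Delta_plus"
    and gD: "\<And>x. x \<in> G \<Longrightarrow> g x \<in> Delta_plus" and r: "r < Dsup G st f g u"
  shows "\<exists>x\<in>G. r < st (f x) (g x) u"
proof -
  have bdd: "bdd_above ((\<lambda>x. st (f x) (g x) u) ` G)"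
    using DP_D(3)[OF st_DP[OF tf fD gD]] by (intro bdd_aboveI[of _ 1]) force
  have "r < (SUP x\<in>G. st (f x) (g x) u)" using r unfolding Dsup_def .
  then show ?thesis using less_cSUP_iff[OF G bdd] by blast
qed

lemma aux3: "(P::real) \<le> St \<Longrightarrow> P' \<le> P \<Longrightarrow> Q \<le> P' \<Longrightarrow> As \<le> As' \<Longrightarrow> Ss - e/3 < As
  \<Longrightarrow> Ss > St - e/3 \<Longrightarrow> Q > As' - e/3 \<Longrightarrow> \<bar>P - St\<bar> < e"
  unfolding abs_less_iff by linarith

lemma Dsup_approx:
  assumes pm: "pm_space G D st" and ct: "continuous_triangle_fun st"
    and fD: "\<And>x. x \<in> G \<Longrightarrow> f x \<in> Delta_plus"
    and flip: "\<And>x y. x \<in> G \<Longrightarrow> y \<in> G \<Longrightarrow> st (D x y) (f y) \<le> f x"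
    and b: "pm_cauchy G D b" and wg: "\<And>x. x \<in> G \<Longrightarrow> wconv (\<lambda>n. D (b n) x) (g x) sequentially"
    and gD: "\<And>x. x \<in> G \<Longrightarrow> g x \<in> Delta_plus"
  shows "wconv (\<lambda>m. st (f (b m)) (g (b m))) (Dsup G st f g) sequentially"
proof -
  have tf: "triangle_fun st" by (rule ctf_tf[OF ct])
  have bG: "\<And>n. b n \<in> G" using b by (rule cauchy_G)
  have G: "G \<noteq> {}" using bG by blast
  define S where "S = Dsup G st f g"
  have SD: "S \<in> Delta_plus" unfolding S_def by (rule Dsup_DP[OF tf G fD gD])
  define \<Phi> where "\<Phi> m = st (f (b m)) (g (b m))" for m
  have \<Phi>le: "\<Phi> m \<le> S" for m unfolding \<Phi>_def S_def by (rule Dsup_upper[OF tf fD gD bG])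
  have gH0: "wconv (\<lambda>m. g (b m)) H0 sequentially" by (rule Pi_toH0[OF pm b wg gD])
  have "wconv \<Phi> S sequentially" unfolding wconv_def
  proof (intro allI impI)
    fix t :: real
    show "(\<lambda>m. \<Phi> m (ereal t)) \<longlonglongrightarrow> S (ereal t)" unfolding tendsto_iff
    proof (intro allI impI)
      fix \<epsilon> :: real assume \<epsilon>: "\<epsilon> > 0"
      have e3: "\<epsilon> / 3 > 0" using \<epsilon> by simp
      have "((\<lambda>y. S (ereal y)) \<longlongrightarrow> S (ereal t)) (at_left t)"
        using DP_D(7)[OF SD, of t] by (simp add: continuous_within)
      moreover have "S (ereal t) - \<epsilon> / 3 < S (ereal t)" using e3 by linarith
      ultimately have "eventually (\<lambda>y. S (ereal y) > S (ereal t) - \<epsilon> / 3) (at_left t)"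
        by (rule order_tendstoD(1))
      then obtain b0 where b0: "b0 < t" "\<And>y. b0 < y \<Longrightarrow> y < t \<Longrightarrow> S (ereal y) > S (ereal t) - \<epsilon> / 3"
        unfolding eventually_at_left_field by blast
      define s where "s = (b0 + t) / 2"
      have s: "b0 < s" "s < t" using b0(1) unfolding s_def by simp_all
      have Ss: "S (ereal s) > S (ereal t) - \<epsilon> / 3" using b0(2)[OF s] .
      have "S (ereal s) - \<epsilon> / 3 < Dsup G st f g (ereal s)" using e3 unfolding S_def by simp
      then obtain x where x: "x \<in> G" "S (ereal s) - \<epsilon> / 3 < st (f x) (g x) (ereal s)"
        using Dsup_less[of st G f g, OF tf G fD gD] by blast
      define A where "A = st (f x) (g x)"
      have AD: "A \<in> Delta_plus" unfolding A_def by (rule st_DP[OF tf fD[OF x(1)] gD[OF x(1)]])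
      have ts: "t - s > 0" using s by simp
      obtain s' where s': "t - (t - s) < s'" "s' < t" "isCont (\<lambda>y. A (ereal y)) s'"
        using dense_avoid[OF DP_discont[OF AD] ts, of t] by blast
      define \<Psi> where "\<Psi> m = st (st (D (b m) x) (f x)) (g (b m))" for m
      have bx: "\<And>m. D (b m) x \<in> Delta_plus" using pm_D(2)[OF pm bG x(1)] .
      have gb: "\<And>m. g (b m) \<in> Delta_plus" using gD[OF bG] .
      have fb: "\<And>m. f (b m) \<in> Delta_plus" using fD[OF bG] .
      have w1: "wconv (\<lambda>m. st (D (b m) x) (f x)) (st (g x) (f x)) sequentially"
        using bx fD[OF x(1)] gD[OF x(1)] by (intro st_cont[OF ct _ _ _ _ wg[OF x(1)] wconv_const])
      have "wconv \<Psi> (st (st (g x) (f x)) H0) sequentially"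
        unfolding \<Psi>_def using st_DP[OF tf bx fD[OF x(1)]] st_DP[OF tf gD[OF x(1)] fD[OF x(1)]] gb H0_DP
        by (intro st_cont[OF ct _ _ _ _ w1 gH0])
      moreover have "st (st (g x) (f x)) H0 = A"
        unfolding A_def using st_H0[OF tf st_DP[OF tf gD[OF x(1)] fD[OF x(1)]]]
          st_comm[OF tf gD[OF x(1)] fD[OF x(1)]] by simp
      ultimately have w\<Psi>: "wconv \<Psi> A sequentially" by simp
      have \<Psi>le: "\<Psi> m \<le> \<Phi> m" for m
        unfolding \<Psi>_def \<Phi>_def
        using st_mono1[OF tf st_DP[OF tf bx fD[OF x(1)]] fb gb flip[OF bG x(1)]] .
      have "(\<lambda>m. \<Psi> m (ereal s')) \<longlonglongrightarrow> A (ereal s')" using w\<Psi> s'(3) unfolding wconv_def by blast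
      moreover have "A (ereal s') - \<epsilon> / 3 < A (ereal s')" using e3 by linarith
      ultimately have ev: "eventually (\<lambda>m. \<Psi> m (ereal s') > A (ereal s') - \<epsilon> / 3) sequentially"
        by (rule order_tendstoD(1))
      show "eventually (\<lambda>m. dist (\<Phi> m (ereal t)) (S (ereal t)) < \<epsilon>) sequentially"
        using ev
      proof (rule eventually_mono)
        fix m assume m: "\<Psi> m (ereal s') > A (ereal s') - \<epsilon> / 3"
        have \<Phi>D: "\<Phi> m \<in> Delta_plus" unfolding \<Phi>_def by (rule st_DP[OF tf fb gb])
        have "\<Phi> m (ereal t) \<le> S (ereal t)" using \<Phi>le[of m] by (simp add: le_fun_def)
        moreover have "\<Phi> m (ereal s') \<le> \<Phi> m (ereal t)" using s'(2) by (intro DP_mono[OF \<Phi>D]) simp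
        moreover have "\<Psi> m (ereal s') \<le> \<Phi> m (ereal s')" using \<Psi>le[of m] by (simp add: le_fun_def)
        moreover have "A (ereal s) \<le> A (ereal s')" using s'(1) by (intro DP_mono[OF AD]) simp
        moreover note x(2)[folded A_def] Ss m
        ultimately show "dist (\<Phi> m (ereal t)) (S (ereal t)) < \<epsilon>"
          unfolding dist_real_def by (rule aux3)
      qed
    qed
  qed
  then show ?thesis unfolding \<Phi>_def S_def .
qed



lemma Pi_seq:
  assumes "f \<in> Pi_space G D st"
  obtains a where "pm_cauchy G D a" "\<And>x. x \<in> G \<Longrightarrow> wconv (\<lambda>n. D (a n) x) (f x) sequentially"
  using Pi_D(4)[OF assms] by blast

lemma Pi_nonempty: "f \<in> Pi_space G D st \<Longrightarrow> G \<noteq> {}"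
  by (metis Pi_seq cauchy_G empty_iff)

lemma Dsup_tri:
  assumes pm: "pm_space G D st" and ct: "continuous_triangle_fun st"
    and f: "f \<in> Pi_space G D st" and g: "g \<in> Pi_space G D st" and h: "h \<in> Pi_space G D st"
  shows "st (Dsup G st f g) (Dsup G st g h) \<le> Dsup G st f h"
proof -
  have tf: "triangle_fun st" by (rule ctf_tf[OF ct])
  have G: "G \<noteq> {}" by (rule Pi_nonempty[OF f])
  note fD = Pi_D(2)[OF f] and gD = Pi_D(2)[OF g] and hD = Pi_D(2)[OF h]
  obtain b where b: "pm_cauchy G D b" "\<And>x. x \<in> G \<Longrightarrow> wconv (\<lambda>n. D (b n) x) (g x) sequentially"
    by (rule Pi_seq[OF g]) blast
  obtain c where c: "pm_cauchy G D c" "\<And>x. x \<in> G \<Longrightarrow> wconv (\<lambda>n. D (c n) x) (h x) sequentially"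
    by (rule Pi_seq[OF h]) blast
  have bG: "\<And>n. b n \<in> G" by (rule cauchy_G[OF b(1)])
  have cG: "\<And>n. c n \<in> G" by (rule cauchy_G[OF c(1)])
  define S where "S = Dsup G st f g"
  define T where "T = Dsup G st g h"
  define R where "R = Dsup G st f h"
  have SD: "S \<in> Delta_plus" unfolding S_def by (rule Dsup_DP[of st G f g, OF tf G fD gD])
  have TD: "T \<in> Delta_plus" unfolding T_def by (rule Dsup_DP[of st G g h, OF tf G gD hD])
  have RD: "R \<in> Delta_plus" unfolding R_def by (rule Dsup_DP[of st G f h, OF tf G fD hD])
  have w\<Phi>: "wconv (\<lambda>m. st (f (b m)) (g (b m))) S sequentially"
    unfolding S_def by (rule Dsup_approx[OF pm ct fD Pi_D(3)[OF f] b(1) b(2) gD])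
  have w\<Phi>': "wconv (\<lambda>m. st (g (c m)) (h (c m))) T sequentially"
    unfolding T_def by (rule Dsup_approx[OF pm ct gD Pi_D(3)[OF g] c(1) c(2) hD])
  have \<Phi>D: "\<And>m. st (f (b m)) (g (b m)) \<in> Delta_plus" using st_DP[OF tf fD[OF bG] gD[OF bG]] .
  have \<Phi>'D: "\<And>m. st (g (c m)) (h (c m)) \<in> Delta_plus" using st_DP[OF tf gD[OF cG] hD[OF cG]] .
  have stepB: "st S (g z) \<le> f z" if z: "z \<in> G" for z
  proof -
    have bz: "\<And>m. D (b m) z \<in> Delta_plus" using pm_D(2)[OF pm bG z] .
    have "wconv (\<lambda>m. st (st (f (b m)) (g (b m))) (D (b m) z)) (st S (g z)) sequentially"
      using \<Phi>D bz SD gD[OF z] by (intro st_cont[OF ct _ _ _ _ w\<Phi> b(2)[OF z]])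
    moreover have "st (st (f (b m)) (g (b m))) (D (b m) z) \<le> f z" for m
    proof -
      have "st (st (f (b m)) (g (b m))) (D (b m) z) \<le> st (f (b m)) (D (b m) z)"
        by (rule st_mono1[OF tf \<Phi>D fD[OF bG] bz st_le_left[OF tf fD[OF bG] gD[OF bG]]])
      also have "\<dots> = st (D z (b m)) (f (b m))"
        using st_comm[OF tf fD[OF bG] bz] pm_D(4)[OF pm bG z] by simp
      also have "\<dots> \<le> f z" by (rule Pi_D(3)[OF f z bG])
      finally show ?thesis .
    qed
    ultimately show ?thesis
      using st_DP[OF tf SD gD[OF z]] fD[OF z]
      by (intro wconv_le[OF _ _ _ wconv_const]) auto
  qed
  have "wconv (\<lambda>m. st S (st (g (c m)) (h (c m)))) (st S T) sequentially"
    using SD \<Phi>'D TD by (intro st_cont[OF ct _ _ _ _ wconv_const w\<Phi>'])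
  moreover have "st S (st (g (c m)) (h (c m))) \<le> R" for m
  proof -
    have "st S (st (g (c m)) (h (c m))) = st (st S (g (c m))) (h (c m))"
      using st_assoc[OF tf SD gD[OF cG] hD[OF cG]] by simp
    also have "\<dots> \<le> st (f (c m)) (h (c m))"
      by (rule st_mono1[OF tf st_DP[OF tf SD gD[OF cG]] fD[OF cG] hD[OF cG] stepB[OF cG]])
    also have "\<dots> \<le> R" unfolding R_def by (rule Dsup_upper[of st G f h, OF tf fD hD cG])
    finally show ?thesis .
  qed
  ultimately have "st S T \<le> R"
    using st_DP[OF tf SD TD] RD by (intro wconv_le[OF _ _ _ wconv_const]) auto
  then show ?thesis unfolding S_def T_def R_def .
qed

lemma Dsup_self:
  assumes pm: "pm_space G D st" and ct: "continuous_triangle_fun st" and f: "f \<in> Pi_space G D st"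
  shows "Dsup G st f f = H0"
proof -
  have tf: "triangle_fun st" by (rule ctf_tf[OF ct])
  have G: "G \<noteq> {}" by (rule Pi_nonempty[OF f])
  note fD = Pi_D(2)[OF f]
  obtain a where a: "pm_cauchy G D a" "\<And>x. x \<in> G \<Longrightarrow> wconv (\<lambda>n. D (a n) x) (f x) sequentially"
    by (rule Pi_seq[OF f]) blast
  have aG: "\<And>n. a n \<in> G" by (rule cauchy_G[OF a(1)])
  have SD: "Dsup G st f f \<in> Delta_plus" by (rule Dsup_DP[of st G f f, OF tf G fD fD])
  have wa: "wconv (\<lambda>m. f (a m)) H0 sequentially" by (rule Pi_toH0[OF pm a(1) a(2) fD])
  have "wconv (\<lambda>m. st (f (a m)) (f (a m))) (st H0 H0) sequentially"
    using fD[OF aG] H0_DP by (intro st_cont[OF ct _ _ _ _ wa wa])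
  then have w: "wconv (\<lambda>m. st (f (a m)) (f (a m))) H0 sequentially"
    using st_H0[OF tf H0_DP] by simp
  have "H0 \<le> Dsup G st f f"
    using Dsup_upper[of st G f f, OF tf fD fD aG] H0_DP SD
    by (intro wconv_le[OF _ _ w wconv_const]) auto
  moreover have "Dsup G st f f \<le> H0" by (rule DP_le_H0[OF SD])
  ultimately show ?thesis by (rule antisym[rotated])
qed

lemma Dsup_H0_half:
  assumes pm: "pm_space G D st" and ct: "continuous_triangle_fun st"
    and f: "f \<in> Pi_space G D st" and g: "g \<in> Pi_space G D st"
    and H: "Dsup G st f g = H0" and y: "y \<in> G"
  shows "f y \<le> g y"
proof -
  have tf: "triangle_fun st" by (rule ctf_tf[OF ct])
  have G: "G \<noteq> {}" by (rule Pi_nonempty[OF f])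
  note fD = Pi_D(2)[OF f] and gD = Pi_D(2)[OF g]
  obtain a where a: "pm_cauchy G D a" "\<And>x. x \<in> G \<Longrightarrow> wconv (\<lambda>n. D (a n) x) (f x) sequentially"
    by (rule Pi_seq[OF f]) blast
  have "\<exists>x\<in>G. 1 - 1 / real (Suc k) < st (f x) (g x) (ereal (1 / real (Suc k)))" for k :: nat
  proof (rule Dsup_less[of st G f g, OF tf G fD gD])
    show "1 - 1 / real (Suc k) < Dsup G st f g (ereal (1 / real (Suc k)))"
      unfolding H by (simp add: H0_real)
  qed
  then obtain xs where xs: "\<And>k. xs k \<in> G"
    "\<And>k. 1 - 1 / real (Suc k) < st (f (xs k)) (g (xs k)) (ereal (1 / real (Suc k)))"
    by metis
  define C where "C k = st (f (xs k)) (g (xs k))" for k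
  have CD: "\<And>k. C k \<in> Delta_plus" unfolding C_def using st_DP[OF tf fD[OF xs(1)] gD[OF xs(1)]] .
  have wC: "wconv C H0 sequentially"
    using CD xs(2) inv_Suc_tendsto unfolding C_def
    by (intro good_H0[where r = "\<lambda>k. 1 / real (Suc k)"]) auto
  have "wconv (\<lambda>k. st (f y) (C k)) (st (f y) H0) sequentially"
    using fD[OF y] CD H0_DP by (intro st_cont[OF ct _ _ _ _ wconv_const wC])
  then have w: "wconv (\<lambda>k. st (f y) (C k)) (f y) sequentially"
    using st_H0[OF tf fD[OF y]] by simp
  have "st (f y) (C k) \<le> g y" for k
  proof -
    have x: "xs k \<in> G" by (rule xs(1))
    have "st (f y) (C k) = st (st (f y) (f (xs k))) (g (xs k))"
      unfolding C_def using st_assoc[OF tf fD[OF y] fD[OF x] gD[OF x]] by simp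
    also have "\<dots> \<le> st (D y (xs k)) (g (xs k))"
      by (rule st_mono1[OF tf st_DP[OF tf fD[OF y] fD[OF x]] pm_D(2)[OF pm y x] gD[OF x]
            Pi_lower[OF pm ct a(1) a(2) fD y x]])
    also have "\<dots> \<le> g y" by (rule Pi_D(3)[OF g y x])
    finally show ?thesis .
  qed
  then show ?thesis
    using fD[OF y] gD[OF y] by (intro wconv_le[OF _ _ w wconv_const]) auto
qed

lemma Dsup_H0_iff:
  assumes pm: "pm_space G D st" and ct: "continuous_triangle_fun st"
    and f: "f \<in> Pi_space G D st" and g: "g \<in> Pi_space G D st"
  shows "Dsup G st f g = H0 \<longleftrightarrow> f = g"
proof
  assume "f = g" then show "Dsup G st f g = H0" using Dsup_self[OF pm ct f] by simp
next
  assume H: "Dsup G st f g = H0"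
  have tf: "triangle_fun st" by (rule ctf_tf[OF ct])
  have H': "Dsup G st g f = H0"
    using H Dsup_sym[of st G f g, OF tf Pi_D(2)[OF f] Pi_D(2)[OF g]] by simp
  show "f = g"
  proof (rule extensionalityI[OF Pi_D(1)[OF f] Pi_D(1)[OF g]])
    fix x assume x: "x \<in> G"
    show "f x = g x"
      using Dsup_H0_half[OF pm ct f g H x] Dsup_H0_half[OF pm ct g f H' x] by (rule antisym)
  qed
qed

lemma Pi_pm:
  assumes pm: "pm_space G D st" and ct: "continuous_triangle_fun st"
  shows "pm_space (Pi_space G D st) (Dsup G st) st"
  unfolding pm_space_def
proof (intro conjI ballI)
  have tf: "triangle_fun st" by (rule ctf_tf[OF ct])
  then show "triangle_fun st" .
  fix p q assume p: "p \<in> Pi_space G D st" and q: "q \<in> Pi_space G D st"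
  show "Dsup G st p q \<in> Delta_plus"
    by (rule Dsup_DP[of st G p q, OF tf Pi_nonempty[OF p] Pi_D(2)[OF p] Pi_D(2)[OF q]])
  show "(Dsup G st p q = H0) = (p = q)" by (rule Dsup_H0_iff[OF pm ct p q])
  show "Dsup G st p q = Dsup G st q p"
    by (rule Dsup_sym[of st G p q, OF tf Pi_D(2)[OF p] Pi_D(2)[OF q]])
  fix r assume r: "r \<in> Pi_space G D st"
  show "st (Dsup G st p q) (Dsup G st q r) \<le> Dsup G st p r" by (rule Dsup_tri[OF pm ct p q r])
qed

lemma delta_Pi:
  assumes pm: "pm_space G D st" and a: "a \<in> G"
  shows "pm_delta G D a \<in> Pi_space G D st"
  unfolding Pi_space_def prob_lipschitz_def
proof (intro CollectI conjI ballI)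
  show "pm_delta G D a \<in> extensional G" unfolding pm_delta_def by (rule restrict_extensional)
  fix x assume x: "x \<in> G"
  show "pm_delta G D a x \<in> Delta_plus" unfolding pm_delta_def using pm_D(2)[OF pm x a] x by simp
  fix y assume y: "y \<in> G"
  show "st (D x y) (pm_delta G D a y) \<le> pm_delta G D a x"
    unfolding pm_delta_def using pm_D(5)[OF pm x y a] x y by simp
next
  have c: "pm_cauchy G D (\<lambda>n. a)" unfolding pm_cauchy_def
  proof (intro conjI allI)
    show "a \<in> G" by (rule a)
    have "(\<lambda>(n::nat, p::nat). D a a) = (\<lambda>_. H0)" using pm_D(3)[OF pm a a] by (simp add: fun_eq_iff)
    then show "wconv (\<lambda>(n, p). D a a) H0 (sequentially \<times>\<^sub>F sequentially)"
      by (simp add: wconv_const)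
  qed
  moreover have "\<forall>x\<in>G. wconv (\<lambda>n. D a x) (pm_delta G D a x) sequentially"
  proof
    fix x assume x: "x \<in> G"
    have "pm_delta G D a x = D a x" unfolding pm_delta_def using x pm_D(4)[OF pm x a] by simp
    then show "wconv (\<lambda>n. D a x) (pm_delta G D a x) sequentially" by (simp add: wconv_const)
  qed
  ultimately show "\<exists>aa. pm_cauchy G D aa \<and> (\<forall>x\<in>G. wconv (\<lambda>n. D (aa n) x) (pm_delta G D a x) sequentially)"
    by blast
qed



lemma Pi_complete:
  assumes pm: "pm_space G D st" and ct: "continuous_triangle_fun st"
  shows "pm_complete (Pi_space G D st) (Dsup G st) st"
  unfolding pm_complete_def
proof (intro conjI allI impI)
  show "pm_space (Pi_space G D st) (Dsup G st) st" by (rule Pi_pm[OF pm ct])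
  have tf: "triangle_fun st" by (rule ctf_tf[OF ct])
  fix fs assume cf: "pm_cauchy (Pi_space G D st) (Dsup G st) fs"
  have fsP: "\<And>n. fs n \<in> Pi_space G D st" by (rule cauchy_G[OF cf])
  have fsC: "wconv (\<lambda>(n, p). Dsup G st (fs n) (fs p)) H0 (sequentially \<times>\<^sub>F sequentially)"
    using cf unfolding pm_cauchy_def by blast
  have G: "G \<noteq> {}" by (rule Pi_nonempty[OF fsP])
  have DsD: "\<And>F H. F \<in> Pi_space G D st \<Longrightarrow> H \<in> Pi_space G D st \<Longrightarrow> Dsup G st F H \<in> Delta_plus"
    using pm_D(2)[OF Pi_pm[OF pm ct]] .
  have "\<exists>x. x \<in> G \<and> 1 - 1 / real (Suc n) < fs n x (ereal (1 / real (Suc n)))" for n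
  proof -
    obtain b where b: "pm_cauchy G D b" "\<And>x. x \<in> G \<Longrightarrow> wconv (\<lambda>n. D (b n) x) (fs n x) sequentially"
      by (rule Pi_seq[OF fsP]) blast
    have bG: "\<And>m. b m \<in> G" by (rule cauchy_G[OF b(1)])
    have fbD: "\<And>m. fs n (b m) \<in> Delta_plus" using Pi_D(2)[OF fsP bG] .
    have "wconv (\<lambda>m. fs n (b m)) H0 sequentially" by (rule Pi_toH0[OF pm b(1) b(2) Pi_D(2)[OF fsP]])
    then have "\<forall>t>0. \<forall>e>0. eventually (\<lambda>m. fs n (b m) (ereal t) > 1 - e) sequentially"
      unfolding wconv_H0_iff[OF fbD] .
    then have "eventually (\<lambda>m. fs n (b m) (ereal (1 / real (Suc n))) > 1 - 1 / real (Suc n)) sequentially"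
      by simp
    then obtain m where "fs n (b m) (ereal (1 / real (Suc n))) > 1 - 1 / real (Suc n)"
      unfolding eventually_sequentially by blast
    then show ?thesis using bG by blast
  qed
  then have "\<forall>n. \<exists>x. x \<in> G \<and> 1 - 1 / real (Suc n) < fs n x (ereal (1 / real (Suc n)))" by blast
  from choice[OF this] obtain a where a: "\<forall>n. a n \<in> G \<and> 1 - 1 / real (Suc n) < fs n (a n) (ereal (1 / real (Suc n)))"
    by blast
  have aG: "\<And>n. a n \<in> G" using a by blast
  have ag: "\<And>n. 1 - 1 / real (Suc n) < fs n (a n) (ereal (1 / real (Suc n)))" using a by blast
  have fsaD: "\<And>n. fs n (a n) \<in> Delta_plus" using Pi_D(2)[OF fsP aG] .
  have good: "\<exists>N. \<forall>n\<ge>N. fs n (a n) (ereal \<eta>) > 1 - \<eta>" if \<eta>: "\<eta> > 0" for \<eta>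
  proof -
    obtain N where N: "inverse (real (Suc N)) < \<eta>" using reals_Archimedean[OF \<eta>] by blast
    show ?thesis
    proof (intro exI allI impI)
      fix n assume n: "n \<ge> N"
      have le: "1 / real (Suc n) \<le> 1 / real (Suc N)" using n by (simp add: frac_le)
      then have "fs n (a n) (ereal (1 / real (Suc n))) \<le> fs n (a n) (ereal \<eta>)"
        using N by (intro DP_mono[OF fsaD]) (simp add: inverse_eq_divide)
      then show "fs n (a n) (ereal \<eta>) > 1 - \<eta>" using ag[of n] le N by (simp add: inverse_eq_divide)
    qed
  qed
  define \<delta> where "\<delta> n = pm_delta G D (a n)" for n
  have \<delta>P: "\<And>n. \<delta> n \<in> Pi_space G D st" unfolding \<delta>_def by (rule delta_Pi[OF pm aG])
  have d1: "Dsup G st (\<delta> n) F = F (a n)" if "F \<in> Pi_space G D st" for n F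
    unfolding \<delta>_def by (rule Dsup_delta[OF pm aG Pi_D(2)[OF that] Pi_D(3)[OF that]])
  have d2: "Dsup G st F (\<delta> n) = F (a n)" if F: "F \<in> Pi_space G D st" for n F
    using pm_D(4)[OF Pi_pm[OF pm ct] F \<delta>P] d1[OF F] by simp
  have d3: "Dsup G st (\<delta> n) (\<delta> p) = D (a n) (a p)" for n p
    using d1[OF \<delta>P, of n p] aG unfolding \<delta>_def pm_delta_def by simp
  have aD: "\<And>n p. D (a n) (a p) \<in> Delta_plus" using pm_D(2)[OF pm aG aG] .
  have ac: "pm_cauchy G D a" unfolding pm_cauchy_def
  proof (intro conjI allI)
    show "a n \<in> G" for n by (rule aG)
    have fam: "\<And>i. (\<lambda>(n, p). D (a n) (a p)) i \<in> Delta_plus" using aD by (simp add: case_prod_beta)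
    show "wconv (\<lambda>(n, p). D (a n) (a p)) H0 (sequentially \<times>\<^sub>F sequentially)"
      unfolding wconv_H0_iff[OF fam]
    proof (intro allI impI)
      fix t e :: real assume t: "t > 0" and e: "e > 0"
      obtain \<eta>1 where \<eta>1: "\<eta>1 > 0" "\<forall>F\<in>Delta_plus. \<forall>L\<in>Delta_plus. F (ereal \<eta>1) > 1 - \<eta>1
          \<longrightarrow> L (ereal \<eta>1) > 1 - \<eta>1 \<longrightarrow> st F L (ereal t) > 1 - e"
        using UC[OF ct t e] by blast
      obtain \<eta>2 where \<eta>2: "\<eta>2 > 0" "\<forall>F\<in>Delta_plus. \<forall>L\<in>Delta_plus. F (ereal \<eta>2) > 1 - \<eta>2
          \<longrightarrow> L (ereal \<eta>2) > 1 - \<eta>2 \<longrightarrow> st F L (ereal \<eta>1) > 1 - \<eta>1"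
        using UC[OF ct \<eta>1(1) \<eta>1(1)] by blast
      have famD: "\<And>i. (\<lambda>(n, p). Dsup G st (fs n) (fs p)) i \<in> Delta_plus"
        using DsD[OF fsP fsP] by (simp add: case_prod_beta)
      have "eventually (\<lambda>i. (\<lambda>(n, p). Dsup G st (fs n) (fs p)) i (ereal \<eta>2) > 1 - \<eta>2) (sequentially \<times>\<^sub>F sequentially)"
        using fsC[unfolded wconv_H0_iff[OF famD]] \<eta>2(1) by blast
      then obtain N1 where N1: "\<And>m n. m \<ge> N1 \<Longrightarrow> n \<ge> N1 \<Longrightarrow> Dsup G st (fs n) (fs m) (ereal \<eta>2) > 1 - \<eta>2"
        unfolding eventually_prod_sequentially by auto
      obtain N2 where N2: "\<And>n. n \<ge> N2 \<Longrightarrow> fs n (a n) (ereal \<eta>1) > 1 - \<eta>1" using good[OF \<eta>1(1)] by blast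
      obtain N3 where N3: "\<And>n. n \<ge> N3 \<Longrightarrow> fs n (a n) (ereal \<eta>2) > 1 - \<eta>2" using good[OF \<eta>2(1)] by blast
      show "eventually (\<lambda>i. (\<lambda>(n, p). D (a n) (a p)) i (ereal t) > 1 - e) (sequentially \<times>\<^sub>F sequentially)"
        unfolding eventually_prod_sequentially
      proof (intro exI allI impI)
        fix m n assume m: "m \<ge> max N1 (max N2 N3)" and n: "n \<ge> max N1 (max N2 N3)"
        define X where "X = fs n (a n)"
        define Y where "Y = Dsup G st (fs n) (fs m)"
        define Z where "Z = fs m (a m)"
        have XD: "X \<in> Delta_plus" unfolding X_def by (rule fsaD)
        have YD: "Y \<in> Delta_plus" unfolding Y_def by (rule DsD[OF fsP fsP])
        have ZD: "Z \<in> Delta_plus" unfolding Z_def by (rule fsaD)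
        have XY: "st X Y (ereal \<eta>1) > 1 - \<eta>1"
          using \<eta>2(2)[rule_format, OF XD YD] N3[of n] N1[of m n] m n unfolding X_def Y_def by simp
        have XYZ: "st (st X Y) Z (ereal t) > 1 - e"
          using \<eta>1(2)[rule_format, OF st_DP[OF tf XD YD] ZD XY] N2[of m] m unfolding Z_def by simp
        have "st X Y \<le> Dsup G st (\<delta> n) (fs m)"
          using Dsup_tri[OF pm ct \<delta>P fsP fsP, of n n m] d1[OF fsP, of n n] unfolding X_def Y_def by simp
        then have "st (st X Y) Z \<le> st (Dsup G st (\<delta> n) (fs m)) (Dsup G st (fs m) (\<delta> m))"
          using st_mono1[OF tf st_DP[OF tf XD YD] DsD[OF \<delta>P fsP] ZD] d2[OF fsP, of m m] unfolding Z_def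
          by simp
        also have "\<dots> \<le> Dsup G st (\<delta> n) (\<delta> m)" by (rule Dsup_tri[OF pm ct \<delta>P fsP \<delta>P])
        also have "\<dots> = D (a n) (a m)" by (rule d3)
        finally have "st (st X Y) Z (ereal t) \<le> D (a n) (a m) (ereal t)" by (simp add: le_fun_def)
        then show "(\<lambda>(n, p). D (a n) (a p)) (n, m) (ereal t) > 1 - e" using XYZ by simp
      qed
    qed
  qed
  have exF: "\<exists>F. F \<in> Delta_plus \<and> wconv (\<lambda>n. D (a n) x) F sequentially" if "x \<in> G" for x
    using EX[OF pm ct ac that] by blast
  define g where "g = restrict (\<lambda>x. SOME F. F \<in> Delta_plus \<and> wconv (\<lambda>n. D (a n) x) F sequentially) G"
  have gx: "g x \<in> Delta_plus \<and> wconv (\<lambda>n. D (a n) x) (g x) sequentially" if x: "x \<in> G" for x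
    unfolding g_def using someI_ex[OF exF[OF x]] x by simp
  have gD: "\<And>x. x \<in> G \<Longrightarrow> g x \<in> Delta_plus" using gx by blast
  have gw: "\<And>x. x \<in> G \<Longrightarrow> wconv (\<lambda>n. D (a n) x) (g x) sequentially" using gx by blast
  have gP: "g \<in> Pi_space G D st"
    unfolding Pi_space_def prob_lipschitz_def
  proof (intro CollectI conjI ballI)
    show "g \<in> extensional G" unfolding g_def by (rule restrict_extensional)
    show "g x \<in> Delta_plus" if "x \<in> G" for x using gD[OF that] .
    show "st (D x y) (g y) \<le> g x" if x: "x \<in> G" and y: "y \<in> G" for x y
    proof -
      have w1: "wconv (\<lambda>n. st (D x y) (D (a n) y)) (st (D x y) (g y)) sequentially"
        using pm_D(2)[OF pm x y] pm_D(2)[OF pm aG y] gD[OF y]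
        by (intro st_cont[OF ct _ _ _ _ wconv_const gw[OF y]])
      have "st (D x y) (D (a n) y) \<le> D (a n) x" for n
      proof -
        have "st (D x y) (D (a n) y) = st (D (a n) y) (D y x)"
          using st_comm[OF tf pm_D(2)[OF pm x y] pm_D(2)[OF pm aG y]] pm_D(4)[OF pm x y] by simp
        also have "\<dots> \<le> D (a n) x" by (rule pm_D(5)[OF pm aG y x])
        finally show ?thesis .
      qed
      then show ?thesis
        using st_DP[OF tf pm_D(2)[OF pm x y] gD[OF y]] gD[OF x]
        by (intro wconv_le[OF _ _ w1 gw[OF x]]) auto
    qed
    show "\<exists>a. pm_cauchy G D a \<and> (\<forall>x\<in>G. wconv (\<lambda>n. D (a n) x) (g x) sequentially)"
      using ac gw by blast
  qed
  have "wconv (\<lambda>n. Dsup G st (fs n) g) H0 sequentially"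
    unfolding wconv_H0_iff[OF DsD[OF fsP gP]]
  proof (intro allI impI)
    fix t e :: real assume t: "t > 0" and e: "e > 0"
    obtain \<eta> where \<eta>: "\<eta> > 0" "\<forall>F\<in>Delta_plus. \<forall>L\<in>Delta_plus. F (ereal \<eta>) > 1 - \<eta>
          \<longrightarrow> L (ereal \<eta>) > 1 - \<eta> \<longrightarrow> st F L (ereal t) > 1 - e"
      using UC[OF ct t e] by blast
    obtain N2 where N2: "\<And>n. n \<ge> N2 \<Longrightarrow> fs n (a n) (ereal \<eta>) > 1 - \<eta>" using good[OF \<eta>(1)] by blast
    have gaD: "\<And>n. g (a n) \<in> Delta_plus" using gD[OF aG] .
    have "wconv (\<lambda>n. g (a n)) H0 sequentially" by (rule Pi_toH0[OF pm ac gw gD])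
    then have "eventually (\<lambda>n. g (a n) (ereal \<eta>) > 1 - \<eta>) sequentially"
      using \<eta>(1) unfolding wconv_H0_iff[OF gaD] by blast
    then obtain N3 where N3: "\<And>n. n \<ge> N3 \<Longrightarrow> g (a n) (ereal \<eta>) > 1 - \<eta>"
      unfolding eventually_sequentially by blast
    show "eventually (\<lambda>n. Dsup G st (fs n) g (ereal t) > 1 - e) sequentially"
      unfolding eventually_sequentially
    proof (intro exI allI impI)
      fix n assume n: "n \<ge> max N2 N3"
      have "st (fs n (a n)) (g (a n)) (ereal t) > 1 - e"
        using \<eta>(2)[rule_format, OF fsaD gaD N2 N3] n by simp
      moreover have "st (fs n (a n)) (g (a n)) \<le> Dsup G st (fs n) g"
        using Dsup_tri[OF pm ct fsP \<delta>P gP, of n n] d1[OF gP, of n] d2[OF fsP, of n n] by simp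
      ultimately show "Dsup G st (fs n) g (ereal t) > 1 - e" by (simp add: le_fun_def less_le_trans)
    qed
  qed
  then show "\<exists>x\<in>Pi_space G D st. wconv (\<lambda>n. Dsup G st (fs n) x) H0 sequentially" using gP by blast
qed



theorem mainTheorem11:
  fixes G :: "'a set" and D :: "'a \<Rightarrow> 'a \<Rightarrow> dfun" and st :: "dfun \<Rightarrow> dfun \<Rightarrow> dfun"
  assumes "pm_space G D st" and "continuous_triangle_fun st"
  shows "(\<forall>a\<in>G. \<forall>b\<in>G. Dsup G st (pm_delta G D a) (pm_delta G D b) = D a b)
    \<and> pm_complete (Pi_space G D st) (Dsup G st) st
    \<and> (\<forall>f\<in>Pi_space G D st. \<exists>a. (\<forall>n. a n \<in> G \<and> pm_delta G D (a n) \<in> Pi_space G D st) \<and>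
          wconv (\<lambda>n. Dsup G st (pm_delta G D (a n)) f) H0 sequentially)"
proof (intro conjI ballI)
  note pm = assms(1) and ct = assms(2)
  fix a b assume a: "a \<in> G" and b: "b \<in> G"
  have bP: "pm_delta G D b \<in> Pi_space G D st" by (rule delta_Pi[OF pm b])
  have "Dsup G st (pm_delta G D a) (pm_delta G D b) = pm_delta G D b a"
    by (rule Dsup_delta[OF pm a Pi_D(2)[OF bP] Pi_D(3)[OF bP]])
  then show "Dsup G st (pm_delta G D a) (pm_delta G D b) = D a b"
    using a unfolding pm_delta_def by simp
next
  show "pm_complete (Pi_space G D st) (Dsup G st) st" by (rule Pi_complete[OF assms])
next
  note pm = assms(1) and ct = assms(2)
  fix f assume f: "f \<in> Pi_space G D st"
  obtain a where a: "pm_cauchy G D a" "\<And>x. x \<in> G \<Longrightarrow> wconv (\<lambda>n. D (a n) x) (f x) sequentially"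
    by (rule Pi_seq[OF f]) blast
  have aG: "\<And>n. a n \<in> G" by (rule cauchy_G[OF a(1)])
  have "Dsup G st (pm_delta G D (a n)) f = f (a n)" for n
    by (rule Dsup_delta[OF pm aG Pi_D(2)[OF f] Pi_D(3)[OF f]])
  moreover have "wconv (\<lambda>n. f (a n)) H0 sequentially" by (rule Pi_toH0[OF pm a(1) a(2) Pi_D(2)[OF f]])
  ultimately have "wconv (\<lambda>n. Dsup G st (pm_delta G D (a n)) f) H0 sequentially" by simp
  moreover have "\<forall>n. a n \<in> G \<and> pm_delta G D (a n) \<in> Pi_space G D st"
    using aG delta_Pi[OF pm aG] by blast
  ultimately show "\<exists>a. (\<forall>n. a n \<in> G \<and> pm_delta G D (a n) \<in> Pi_space G D st) \<and>
          wconv (\<lambda>n. Dsup G st (pm_delta G D (a n)) f) H0 sequentially" by blast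
qed

end
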